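(* Let $(p_k)_{k\in\mathbb{Z}}$ with $p_k\in(0,1)$, $q_k=1-p_k$, and let $X=(X_n)_{n\ge0}$ be the nearest-neighbour random walk on $\mathbb{Z}$ started at $X_0=0$ which jumps from $k$ to $k+1$ with probability $p_k$ and from $k$ to $k-1$ with probability $q_k$. Let $\Theta=\inf\{n>0: X_n=0\}$ and, on $\{\Theta<\infty\}$, let $X^\Theta=(X_n:0\le n\le\Theta)$. (i) For every positive excursion $x$, the probability $\mathbb{P}(X^\Theta=x\mid X^\Theta\in\mathcal{X}^+)$ depends only on the level numbers $N(x)$; i.e. if $x,x'\in\mathcal{X}^+$ satisfy $N(x)=N(x')$, then $\mathbb{P}(X^\Theta=x\mid X^\Theta\in\mathcal{X}^+)=\mathbb{P}(X^\Theta=x'\mid X^\Theta\in\mathcal{X}^+)$. (ii) Conversely, assume that there is no finite nonempty set $K\subset\{1,2,\dots\}$ and integers $a_h\in\mathbb{Z}\setminus\{0\}$, $h\in K$, with $\sum_{h\in K}a_h\log(p_hq_{h+1})=0$. Then for $x,x'\in\mathcal{X}^+$, $\mathbb{P}(X^\Theta=x\mid X^\Theta\in\mathcal{X}^+)=\mathbb{P}(X^\Theta=x'\mid X^\Theta\in\mathcal{X}^+)$ implies $N(x)=N(x')$.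
   Context: A positive excursion is a finite sequence $x=(x_n:0\le n\le\theta)$ of integers with $x_0=x_\theta=0$, $x_n>0$ for $0<n<\theta$, and jumps $y_n=x_{n+1}-x_n\in\{1,-1\}$ for $0\le n<\theta$; $\theta=\theta(x)$ is its length. $\mathcal{X}^+$ denotes the set of all positive excursions. For $x\in\mathcal{X}^+$, its level numbers are the sequence $N(x)=(N_h(x):h\ge0)$, where $N_h(x)=|\{n\in[0,\theta):y_n=1,\ x_n=h\}|$ (the number of up-steps starting from level $h$, i.e. the number of "individuals born at level $h$"). The event $\{X^\Theta\in\mathcal{X}^+\}$ is the event that $\Theta<\infty$ and $X_1=1$; it has positive probability. *)

theory Defs
  imports "HOL-Analysis.Analysis"
begin

text \<open>A finite integer path is a list xs = [x_0, ..., x_theta], theta = length xs - 1.\<close>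

definition pos_exc :: "int list \<Rightarrow> bool" where
  "pos_exc xs \<longleftrightarrow> length xs \<ge> 2 \<and> xs ! 0 = 0 \<and> last xs = 0
     \<and> (\<forall>n. 0 < n \<and> n < length xs - 1 \<longrightarrow> xs ! n > 0)
     \<and> (\<forall>n < length xs - 1. xs ! (Suc n) - xs ! n = 1 \<or> xs ! (Suc n) - xs ! n = -1)"

definition level_num :: "int list \<Rightarrow> nat \<Rightarrow> nat" where
  "level_num xs h = card {n. n < length xs - 1 \<and> xs ! (Suc n) - xs ! n = 1 \<and> xs ! n = int h}"

definition level_nums :: "int list \<Rightarrow> (nat \<Rightarrow> nat)" where
  "level_nums xs = (\<lambda>h. level_num xs h)"

text \<open>For a positive excursion xs this equals P(X^Theta = xs).\<close>
definition path_prob :: "(int \<Rightarrow> real) \<Rightarrow> int list \<Rightarrow> real" where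
  "path_prob p xs = (\<Prod>n < length xs - 1.
      if xs ! (Suc n) - xs ! n = 1 then p (xs ! n) else 1 - p (xs ! n))"

text \<open>P(X^Theta = x | X^Theta in X^+); the event {X^Theta in X^+} is the countable
  disjoint union of the events {X^Theta = y}, y a positive excursion.\<close>
definition cond_exc_prob :: "(int \<Rightarrow> real) \<Rightarrow> int list \<Rightarrow> real" where
  "cond_exc_prob p xs = path_prob p xs / infsum (path_prob p) {ys. pos_exc ys}"

end

theory Submission
  imports Defs
begin

fun cnt :: "(int \<Rightarrow> int \<Rightarrow> bool) \<Rightarrow> int list \<Rightarrow> nat" where
  "cnt P (a # b # rest) = (if P a b then 1 else 0) + cnt P (b # rest)"
| "cnt P _ = 0"

fun stp :: "int list \<Rightarrow> bool" where
  "stp (a # b # rest) = ((b - a = 1 \<or> b - a = -1) \<and> stp (b # rest))"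
| "stp _ = True"

definition pfree :: "int list set \<Rightarrow> bool" where
  "pfree S \<longleftrightarrow> (\<forall>xs\<in>S. \<forall>ys\<in>S. \<forall>zs. ys = xs @ zs \<longrightarrow> zs = [])"

definition U :: "int \<Rightarrow> int list \<Rightarrow> nat" where
  "U h xs = cnt (\<lambda>a b. b - a = 1 \<and> a = h) xs"

definition D :: "int \<Rightarrow> int list \<Rightarrow> nat" where
  "D h xs = cnt (\<lambda>a b. b - a = -1 \<and> a = h) xs"

lemma card_cnt: "card {n. n < length xs - 1 \<and> P (xs!n) (xs!Suc n)} = cnt P xs"
proof (induction xs rule: induct_list012)
  case 1 show ?case by simp
next
  case (2 x) show ?case by simp
next
  case (3 a b rest)
  let ?T = "{n. n < length (b#rest) - 1 \<and> P ((b#rest)!n) ((b#rest)!Suc n)}"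
  have eq: "{n. n < length (a#b#rest) - 1 \<and> P ((a#b#rest)!n) ((a#b#rest)!Suc n)}
      = (if P a b then {0} else {}) \<union> Suc ` ?T"
    apply (rule set_eqI) subgoal for n by (cases n) auto done
  have fin: "finite ?T" by (rule finite_subset[of _ "{..<length (b#rest)}"]) auto
  have "card ((if P a b then {0} else {}) \<union> Suc ` ?T) = (if P a b then 1 else 0) + card (Suc ` ?T)"
    using fin by (auto simp: card_insert_if)
  also have "card (Suc ` ?T) = card ?T" by (simp add: card_image)
  finally show ?case using eq 3 by simp
qed

lemma stp_iff: "stp xs \<longleftrightarrow> (\<forall>n < length xs - 1. xs!Suc n - xs!n = 1 \<or> xs!Suc n - xs!n = -1)"
proof (induction xs rule: induct_list012)
  case (3 a b rest)
  show ?case using 3(2) by (simp add: All_less_Suc2)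
qed auto

lemma pp_cons2: "path_prob p (a#b#rest) = (if b - a = 1 then p a else 1 - p a) * path_prob p (b#rest)"
  unfolding path_prob_def by (simp del: prod.lessThan_Suc add: prod.lessThan_Suc_shift) (auto intro!: prod.cong)

lemma pp_single: "path_prob p [a] = 1"
  by (simp add: path_prob_def)

lemma U_cons2: "U h (a#b#rest) = (if b - a = 1 \<and> a = h then 1 else 0) + U h (b#rest)"
  by (simp add: U_def)
lemma D_cons2: "D h (a#b#rest) = (if b - a = -1 \<and> a = h then 1 else 0) + D h (b#rest)"
  by (simp add: D_def)

lemma cnt_set: "cnt (\<lambda>a b. Q a b \<and> a = h) xs \<noteq> 0 \<Longrightarrow> h \<in> set xs"
  by (induction xs rule: induct_list012) (auto split: if_splits)

lemma cross: "stp xs \<Longrightarrow> xs \<noteq> [] \<Longrightarrow> int (U h xs) - int (D (h+1) xs)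
   = (if hd xs \<le> h \<and> h < last xs then 1 else 0) - (if last xs \<le> h \<and> h < hd xs then 1 else 0)"
proof (induction xs rule: induct_list012)
  case (2 x) then show ?case by (simp add: U_def D_def)
next
  case (3 a b rest)
  then have IH: "int (U h (b#rest)) - int (D (h+1) (b#rest))
   = (if b \<le> h \<and> h < last (b#rest) then 1 else 0) - (if last (b#rest) \<le> h \<and> h < b then 1 else 0)"
    by simp
  have st: "b - a = 1 \<or> b - a = -1" using 3 by simp
  show ?case using IH st unfolding U_cons2 D_cons2 by (auto split: if_splits)
qed auto

lemma pfree_mono: "pfree S \<Longrightarrow> A \<subseteq> S \<Longrightarrow> pfree A"
  unfolding pfree_def by (meson subsetD)

lemma branch:
  assumes IH: "\<And>S'. finite S' \<Longrightarrow> \<forall>xs\<in>S'. xs \<noteq> [] \<and> hd xs = y \<and> stp xs \<and> length xs \<le> n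
      \<Longrightarrow> pfree S' \<Longrightarrow> sum (path_prob p) S' \<le> 1"
    and fin: "finite A"
    and sh: "\<forall>xs\<in>A. \<exists>rest. xs = x0#y#rest \<and> stp (y#rest) \<and> length (y#rest) \<le> n"
    and pf: "pfree A"
    and f0: "0 \<le> (if y - x0 = 1 then p x0 else 1 - p x0)"
  shows "sum (path_prob p) A \<le> (if y - x0 = 1 then p x0 else 1 - p x0)"
proof -
  let ?f = "(if y - x0 = 1 then p x0 else 1 - p x0)"
  have "sum (path_prob p) A = sum (\<lambda>xs. ?f * path_prob p (tl xs)) A"
  proof (rule sum.cong)
    fix xs assume "xs \<in> A"
    then obtain rest where "xs = x0#y#rest" using sh by blast
    then show "path_prob p xs = ?f * path_prob p (tl xs)" by (simp add: pp_cons2)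
  qed simp
  also have "\<dots> = ?f * sum (path_prob p) (tl ` A)"
  proof -
    have inj: "inj_on tl A"
    proof (rule inj_onI)
      fix xs ys assume "xs \<in> A" "ys \<in> A" "tl xs = tl ys"
      moreover obtain r1 where "xs = x0#y#r1" using sh \<open>xs \<in> A\<close> by blast
      moreover obtain r2 where "ys = x0#y#r2" using sh \<open>ys \<in> A\<close> by blast
      ultimately show "xs = ys" by simp
    qed
    show ?thesis by (simp add: sum_distrib_left sum.reindex[OF inj])
  qed
  also have "\<dots> \<le> ?f * 1"
  proof (rule mult_left_mono[OF _ f0])
    show "sum (path_prob p) (tl ` A) \<le> 1"
    proof (rule IH)
      show "finite (tl ` A)" using fin by simp
      show "\<forall>xs\<in>tl ` A. xs \<noteq> [] \<and> hd xs = y \<and> stp xs \<and> length xs \<le> n" using sh by auto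
      show "pfree (tl ` A)" unfolding pfree_def
      proof (intro ballI allI impI)
        fix xs ys zs assume a: "xs \<in> tl ` A" "ys \<in> tl ` A" "ys = xs @ zs"
        then obtain xs' ys' where b: "xs' \<in> A" "ys' \<in> A" "xs = tl xs'" "ys = tl ys'" by blast
        obtain r1 where r1: "xs' = x0#y#r1" using sh b(1) by blast
        obtain r2 where r2: "ys' = x0#y#r2" using sh b(2) by blast
        have "ys' = xs' @ zs" using a(3) b(3,4) r1 r2 by simp
        then show "zs = []" using pf b unfolding pfree_def by blast
      qed
    qed
  qed
  finally show ?thesis by simp
qed

lemma pf_sum:
  assumes P: "\<forall>k. 0 \<le> p k \<and> p k \<le> 1"
  shows "finite S \<Longrightarrow> \<forall>xs\<in>S. xs \<noteq> [] \<and> hd xs = x0 \<and> stp xs \<and> length xs \<le> n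
      \<Longrightarrow> pfree S \<Longrightarrow> sum (path_prob p) S \<le> 1"
proof (induction n arbitrary: S x0)
  case 0
  then have "S = {}" by auto
  then show ?case by simp
next
  case (Suc n)
  show ?case
  proof (cases "[x0] \<in> S")
    case True
    have "S = {[x0]}"
    proof (intro equalityI subsetI)
      fix ys assume ys: "ys \<in> S"
      then have "ys = [x0] @ tl ys" using Suc.prems(2) by (cases ys) auto
      then have "tl ys = []" using Suc.prems(3) True ys unfolding pfree_def by blast
      then show "ys \<in> {[x0]}" using \<open>ys = [x0] @ tl ys\<close> by simp
    qed (use True in auto)
    then show ?thesis by (simp add: pp_single)
  next
    case False
    have sh: "\<forall>xs\<in>S. \<exists>b rest. xs = x0#b#rest \<and> (b = x0+1 \<or> b = x0-1) \<and> stp (b#rest) \<and> length (b#rest) \<le> n"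
    proof
      fix xs assume xs: "xs \<in> S"
      then have h: "xs \<noteq> [] \<and> hd xs = x0 \<and> stp xs \<and> length xs \<le> Suc n" using Suc.prems(2) by blast
      then obtain t where t: "xs = x0 # t" by (cases xs) auto
      then have "t \<noteq> []" using False xs by auto
      then obtain b rest where "t = b # rest" by (cases t) auto
      then show "\<exists>b rest. xs = x0#b#rest \<and> (b = x0+1 \<or> b = x0-1) \<and> stp (b#rest) \<and> length (b#rest) \<le> n"
        using h t by (auto simp del: stp.simps simp: stp.simps(1))
    qed
    define A1 where "A1 = {xs\<in>S. xs!1 = x0+1}"
    define A2 where "A2 = {xs\<in>S. xs!1 \<noteq> x0+1}"
    have SU: "S = A1 \<union> A2" "A1 \<inter> A2 = {}" unfolding A1_def A2_def by auto
    have fin: "finite A1" "finite A2" using Suc.prems(1) unfolding A1_def A2_def by auto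
    have pf1: "pfree A1" "pfree A2" using Suc.prems(3) pfree_mono unfolding A1_def A2_def by auto
    have s1: "sum (path_prob p) A1 \<le> (if (x0+1) - x0 = 1 then p x0 else 1 - p x0)"
    proof (rule branch[OF _ fin(1) _ pf1(1)])
      show "\<forall>xs\<in>A1. \<exists>rest. xs = x0#(x0+1)#rest \<and> stp ((x0+1)#rest) \<and> length ((x0+1)#rest) \<le> n"
      proof
        fix xs assume "xs \<in> A1"
        then obtain b rest where "xs = x0#b#rest" "b = x0+1 \<or> b = x0-1" "stp (b#rest)" "length (b#rest) \<le> n" "xs!1 = x0+1"
          using sh unfolding A1_def by blast
        then show "\<exists>rest. xs = x0#(x0+1)#rest \<and> stp ((x0+1)#rest) \<and> length ((x0+1)#rest) \<le> n" by auto
      qed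
    qed (use Suc.IH P in auto)
    have s2: "sum (path_prob p) A2 \<le> (if (x0-1) - x0 = 1 then p x0 else 1 - p x0)"
    proof (rule branch[OF _ fin(2) _ pf1(2)])
      show "\<forall>xs\<in>A2. \<exists>rest. xs = x0#(x0-1)#rest \<and> stp ((x0-1)#rest) \<and> length ((x0-1)#rest) \<le> n"
      proof
        fix xs assume "xs \<in> A2"
        then obtain b rest where "xs = x0#b#rest" "b = x0+1 \<or> b = x0-1" "stp (b#rest)" "length (b#rest) \<le> n" "xs!1 \<noteq> x0+1"
          using sh unfolding A2_def by blast
        then show "\<exists>rest. xs = x0#(x0-1)#rest \<and> stp ((x0-1)#rest) \<and> length ((x0-1)#rest) \<le> n" by auto
      qed
    qed (use Suc.IH P in auto)
    have "sum (path_prob p) S = sum (path_prob p) A1 + sum (path_prob p) A2"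
      using SU fin by (simp add: sum.union_disjoint)
    then show ?thesis using s1 s2 by simp
  qed
qed

lemma prod_form: "stp xs \<Longrightarrow> finite S \<Longrightarrow> set xs \<subseteq> S \<Longrightarrow> (\<lambda>x. x - 1) ` set xs \<subseteq> S \<Longrightarrow>
  path_prob p xs = (\<Prod>h\<in>S. p h ^ U h xs * (1 - p (h+1)) ^ D (h+1) xs)"
proof (induction xs rule: induct_list012)
  case 1 then show ?case by (simp add: path_prob_def U_def D_def)
next
  case (2 x) then show ?case by (simp add: path_prob_def U_def D_def)
next
  case (3 a b rest)
  have IH: "path_prob p (b#rest) = (\<Prod>h\<in>S. p h ^ U h (b#rest) * (1 - p (h+1)) ^ D (h+1) (b#rest))"
    using 3 by auto
  have st: "b - a = 1 \<or> b - a = -1" using 3 by simp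
  have aS: "a \<in> S" "a - 1 \<in> S" using 3 by auto
  have key: "(\<Prod>h\<in>S. p h ^ (if b - a = 1 \<and> a = h then 1 else 0) * (1 - p (h+1)) ^ (if b - a = -1 \<and> a = h+1 then 1 else 0))
     = (if b - a = 1 then p a else 1 - p a)"
  proof (cases "b - a = 1")
    case True
    have "(\<Prod>h\<in>S. p h ^ (if b - a = 1 \<and> a = h then 1 else 0) * (1 - p (h+1)) ^ (if b - a = -1 \<and> a = h+1 then 1 else 0))
       = (\<Prod>h\<in>S. if h = a then p h else 1)"
      by (rule prod.cong) (use True in auto)
    also have "\<dots> = p a" using aS \<open>finite S\<close> by (simp add: prod.delta)
    finally show ?thesis using True by simp
  next
    case False
    then have F: "b - a = -1" using st by simp
    have "(\<Prod>h\<in>S. p h ^ (if b - a = 1 \<and> a = h then 1 else 0) * (1 - p (h+1)) ^ (if b - a = -1 \<and> a = h+1 then 1 else 0))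
       = (\<Prod>h\<in>S. if h = a - 1 then 1 - p (h+1) else 1)"
      by (rule prod.cong) (use F in auto)
    also have "\<dots> = 1 - p a" using aS \<open>finite S\<close> by (simp add: prod.delta)
    finally show ?thesis using False by simp
  qed
  have "(\<Prod>h\<in>S. p h ^ U h (a#b#rest) * (1 - p (h+1)) ^ D (h+1) (a#b#rest))
     = (\<Prod>h\<in>S. (p h ^ (if b - a = 1 \<and> a = h then 1 else 0) * (1 - p (h+1)) ^ (if b - a = -1 \<and> a = h+1 then 1 else 0))
         * (p h ^ U h (b#rest) * (1 - p (h+1)) ^ D (h+1) (b#rest)))"
    unfolding U_cons2 D_cons2 by (rule prod.cong) (simp_all add: power_add algebra_simps)
  also have "\<dots> = (\<Prod>h\<in>S. p h ^ (if b - a = 1 \<and> a = h then 1 else 0) * (1 - p (h+1)) ^ (if b - a = -1 \<and> a = h+1 then 1 else 0))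
         * (\<Prod>h\<in>S. p h ^ U h (b#rest) * (1 - p (h+1)) ^ D (h+1) (b#rest))"
    by (rule prod.distrib)
  also have "\<dots> = (if b - a = 1 then p a else 1 - p a) * path_prob p (b#rest)"
    by (simp only: key IH)
  finally show ?case by (simp add: pp_cons2)
qed

lemma exc_facts:
  assumes "pos_exc xs"
  shows "xs \<noteq> [] \<and> hd xs = 0 \<and> last xs = 0 \<and> stp xs \<and> (\<forall>x\<in>set xs. 0 \<le> x) \<and> length xs \<ge> 2"
proof -
  have ne: "xs \<noteq> []" using assms unfolding pos_exc_def by auto
  have h: "hd xs = 0" using assms ne unfolding pos_exc_def by (simp add: hd_conv_nth)
  have l: "last xs = 0" using assms unfolding pos_exc_def by simp
  have s: "stp xs" using assms unfolding pos_exc_def stp_iff by simp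
  have nn: "\<forall>x\<in>set xs. 0 \<le> x"
  proof
    fix x assume "x \<in> set xs"
    then obtain n where n: "n < length xs" "xs ! n = x" by (auto simp: in_set_conv_nth)
    show "0 \<le> x"
    proof (cases "n = 0 \<or> n = length xs - 1")
      case True
      then show ?thesis using n assms ne unfolding pos_exc_def by (auto simp: last_conv_nth)
    next
      case False
      then have "0 < n \<and> n < length xs - 1" using n by auto
      then have "xs ! n > 0" using assms unfolding pos_exc_def by blast
      then show ?thesis using n by simp
    qed
  qed
  show ?thesis using ne h l s nn assms unfolding pos_exc_def by simp
qed

lemma level_U: "level_num xs h = U (int h) xs"
  unfolding level_num_def U_def using card_cnt[of xs "\<lambda>a b. b - a = 1 \<and> a = int h"] by simp

lemma U_zero: "h \<notin> set xs \<Longrightarrow> U h xs = 0"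
  unfolding U_def using cnt_set[of "\<lambda>a b. b - a = 1" h xs] by blast

lemma exc_form:
  assumes ex: "pos_exc xs" and sub: "set xs \<subseteq> {0..<int M}"
  shows "path_prob p xs = (\<Prod>h<M. (p (int h) * (1 - p (int h + 1))) ^ level_num xs h)"
proof -
  have F: "xs \<noteq> [] \<and> hd xs = 0 \<and> last xs = 0 \<and> stp xs \<and> (\<forall>x\<in>set xs. 0 \<le> x) \<and> length xs \<ge> 2"
    using exc_facts[OF ex] .
  let ?S = "{-1..<int M}"
  have "path_prob p xs = (\<Prod>h\<in>?S. p h ^ U h xs * (1 - p (h+1)) ^ D (h+1) xs)"
  proof (rule prod_form)
    show "stp xs" using F by simp
    show "finite ?S" by simp
    show "set xs \<subseteq> ?S" using sub by auto
    show "(\<lambda>x. x - 1) ` set xs \<subseteq> ?S"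
    proof
      fix y assume "y \<in> (\<lambda>x. x - 1) ` set xs"
      then obtain x where "x \<in> set xs" "y = x - 1" by blast
      moreover then have "x \<in> {0..<int M}" using sub by blast
      ultimately show "y \<in> ?S" by auto
    qed
  qed
  also have "\<dots> = (\<Prod>h\<in>?S. (p h * (1 - p (h+1))) ^ U h xs)"
  proof (rule prod.cong)
    fix h
    have "int (U h xs) - int (D (h+1) xs) = 0" using cross[of xs h] F by simp
    then have "D (h+1) xs = U h xs" by simp
    then show "p h ^ U h xs * (1 - p (h+1)) ^ D (h+1) xs = (p h * (1 - p (h+1))) ^ U h xs"
      by (simp add: power_mult_distrib)
  qed simp
  also have "?S = insert (-1) {0..<int M}" by auto
  also have "(\<Prod>h\<in>insert (-1) {0..<int M}. (p h * (1 - p (h+1))) ^ U h xs)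
      = (\<Prod>h\<in>{0..<int M}. (p h * (1 - p (h+1))) ^ U h xs)"
  proof -
    have "U (-1) xs = 0" using F U_zero by force
    then show ?thesis by simp
  qed
  also have "{0..<int M} = int ` {..<M}"
    using image_int_atLeastLessThan[of 0 M] by (simp add: atLeast0LessThan)
  also have "(\<Prod>h\<in>int ` {..<M}. (p h * (1 - p (h+1))) ^ U h xs)
      = (\<Prod>h<M. (p (int h) * (1 - p (int h + 1))) ^ U (int h) xs)"
    by (simp add: prod.reindex)
  finally show ?thesis by (simp add: level_U)
qed

lemma exc_pfree:
  assumes "pos_exc xs" "pos_exc ys" "ys = xs @ zs"
  shows "zs = []"
proof (rule ccontr)
  assume "zs \<noteq> []"
  have F: "xs \<noteq> [] \<and> hd xs = 0 \<and> last xs = 0 \<and> stp xs \<and> (\<forall>x\<in>set xs. 0 \<le> x) \<and> length xs \<ge> 2"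
    using exc_facts[OF assms(1)] .
  let ?k = "length xs - 1"
  have "ys ! ?k = xs ! ?k" using assms(3) F by (simp add: nth_append)
  also have "\<dots> = 0" using F last_conv_nth[of xs] by simp
  finally have z: "ys ! ?k = 0" .
  have "0 < ?k" using F by simp
  moreover have "?k < length ys - 1" using assms(3) \<open>zs \<noteq> []\<close> F by (cases zs) auto
  ultimately have "ys ! ?k > 0" using assms(2) unfolding pos_exc_def by blast
  then show False using z by simp
qed

lemma pp_nonneg: "\<forall>k. 0 \<le> p k \<and> p k \<le> 1 \<Longrightarrow> 0 \<le> path_prob p xs"
  unfolding path_prob_def by (rule prod_nonneg) auto

lemma sum_le1:
  assumes P: "\<forall>k. 0 \<le> p k \<and> p k \<le> 1" and fin: "finite F" and sub: "F \<subseteq> {ys. pos_exc ys}"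
  shows "sum (path_prob p) F \<le> 1"
proof (rule pf_sum[OF P fin])
  show "\<forall>xs\<in>F. xs \<noteq> [] \<and> hd xs = 0 \<and> stp xs \<and> length xs \<le> (\<Sum>ys\<in>F. length ys)"
    using sub exc_facts fin member_le_sum[of _ F length] by fastforce
  show "pfree F" unfolding pfree_def using sub exc_pfree by blast
qed

lemma level0:
  assumes ex: "pos_exc xs" shows "level_num xs 0 = 1"
proof -
  have F: "xs \<noteq> [] \<and> hd xs = 0 \<and> last xs = 0 \<and> stp xs \<and> (\<forall>x\<in>set xs. 0 \<le> x) \<and> length xs \<ge> 2"
    using exc_facts[OF ex] .
  have x0: "xs ! 0 = 0" using ex unfolding pos_exc_def by simp
  have "xs ! 1 \<in> set xs" using F by simp
  then have "xs ! 1 \<ge> 0" using F by blast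
  moreover have "xs ! 1 - xs ! 0 = 1 \<or> xs ! 1 - xs ! 0 = -1" using ex F unfolding pos_exc_def by force
  ultimately have x1: "xs ! 1 - xs ! 0 = 1" using x0 by auto
  have "{n. n < length xs - 1 \<and> xs ! (Suc n) - xs ! n = 1 \<and> xs ! n = int 0} = {0}"
  proof (intro equalityI subsetI)
    fix n assume n: "n \<in> {n. n < length xs - 1 \<and> xs ! (Suc n) - xs ! n = 1 \<and> xs ! n = int 0}"
    show "n \<in> {0}"
    proof (rule ccontr)
      assume "n \<notin> {0}"
      then have "0 < n \<and> n < length xs - 1" using n by auto
      then have "xs ! n > 0" using ex unfolding pos_exc_def by blast
      then show False using n by simp
    qed
  next
    fix n assume "n \<in> {0::nat}"
    then show "n \<in> {n. n < length xs - 1 \<and> xs ! (Suc n) - xs ! n = 1 \<and> xs ! n = int 0}"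
      using x0 x1 F by auto
  qed
  then show ?thesis unfolding level_num_def by simp
qed

lemma bound_ex: "finite A \<Longrightarrow> \<forall>x\<in>A. (0::int) \<le> x \<Longrightarrow> \<exists>M. A \<subseteq> {0..<int M}"
proof (induction A rule: finite_induct)
  case empty then show ?case by auto
next
  case (insert x A)
  then obtain M where "A \<subseteq> {0..<int M}" by auto
  then have "insert x A \<subseteq> {0..<int (max M (nat x + 1))}" using insert.prems by auto
  then show ?case by blast
qed

lemma two_bound:
  assumes "pos_exc x" "pos_exc x'"
  shows "\<exists>M. set x \<subseteq> {0..<int M} \<and> set x' \<subseteq> {0..<int M}"
proof -
  have "\<forall>y\<in>set x \<union> set x'. 0 \<le> y" using exc_facts[OF assms(1)] exc_facts[OF assms(2)] by blast
  then have "\<exists>M. set x \<union> set x' \<subseteq> {0..<int M}"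
    using bound_ex[of "set x \<union> set x'"] by blast
  then show ?thesis by auto
qed

theorem proposition1:
  fixes p :: "int \<Rightarrow> real"
  assumes "\<forall>k. 0 < p k \<and> p k < 1"
  shows "(\<forall>x x'. pos_exc x \<and> pos_exc x' \<and> level_nums x = level_nums x'
            \<longrightarrow> cond_exc_prob p x = cond_exc_prob p x')
       \<and> ((\<not> (\<exists>(K :: nat set) (a :: nat \<Rightarrow> int). finite K \<and> K \<noteq> {} \<and> 0 \<notin> K
                \<and> (\<forall>h\<in>K. a h \<noteq> 0)
                \<and> (\<Sum>h\<in>K. real_of_int (a h) * ln (p (int h) * (1 - p (int h + 1)))) = 0))
          \<longrightarrow> (\<forall>x x'. pos_exc x \<and> pos_exc x' \<and> cond_exc_prob p x = cond_exc_prob p x'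
                 \<longrightarrow> level_nums x = level_nums x'))"
proof (intro conjI allI impI)
  have P: "\<forall>k. 0 \<le> p k \<and> p k \<le> 1" using assms by (auto intro: less_imp_le)
  let ?E = "{ys. pos_exc ys}"
  let ?c = "\<lambda>h::nat. p (int h) * (1 - p (int h + 1))"
  have cpos: "\<And>h. ?c h > 0" using assms by simp
  have summ: "path_prob p summable_on ?E"
  proof (rule nonneg_bdd_above_summable_on)
    show "\<And>x. x \<in> ?E \<Longrightarrow> 0 \<le> path_prob p x" using pp_nonneg[OF P] by blast
    show "bdd_above (sum (path_prob p) ` {F. F \<subseteq> ?E \<and> finite F})"
      by (rule bdd_aboveI2[of _ _ 1]) (use sum_le1[OF P] in blast)
  qed
  have ex0: "pos_exc [0,1,0]" unfolding pos_exc_def by (auto simp: less_Suc_eq nth_Cons')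
  have "infsum (path_prob p) {[0,1,0]} \<le> infsum (path_prob p) ?E"
    by (rule infsum_mono_neutral) (use summ ex0 pp_nonneg[OF P] in auto)
  moreover have "path_prob p [0,1,0] > 0" using assms by (simp add: pp_cons2 pp_single)
  ultimately have Dpos: "infsum (path_prob p) ?E > 0" by simp
  have form: "\<And>x M. pos_exc x \<Longrightarrow> set x \<subseteq> {0..<int M} \<Longrightarrow>
      path_prob p x = (\<Prod>h<M. ?c h ^ level_num x h)" by (rule exc_form)
  {
    fix x x'
    assume a: "pos_exc x \<and> pos_exc x' \<and> level_nums x = level_nums x'"
    then obtain M where M: "set x \<subseteq> {0..<int M}" "set x' \<subseteq> {0..<int M}" using two_bound by blast
    have "\<And>h. level_num x h = level_num x' h" using a unfolding level_nums_def by metis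
    then have "path_prob p x = path_prob p x'" using form[of x M] form[of x' M] a M by simp
    then show "cond_exc_prob p x = cond_exc_prob p x'" unfolding cond_exc_prob_def by simp
  }
  {
    assume hyp: "\<not> (\<exists>(K :: nat set) (a :: nat \<Rightarrow> int). finite K \<and> K \<noteq> {} \<and> 0 \<notin> K
                \<and> (\<forall>h\<in>K. a h \<noteq> 0)
                \<and> (\<Sum>h\<in>K. real_of_int (a h) * ln (p (int h) * (1 - p (int h + 1)))) = 0)"
    fix x x'
    assume a: "pos_exc x \<and> pos_exc x' \<and> cond_exc_prob p x = cond_exc_prob p x'"
    then have eqp: "path_prob p x = path_prob p x'" using Dpos unfolding cond_exc_prob_def by simp
    obtain M where M: "set x \<subseteq> {0..<int M}" "set x' \<subseteq> {0..<int M}" using two_bound a by blast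
    let ?N = "level_num x" and ?N' = "level_num x'"
    have lnp: "\<And>N. ln (\<Prod>h<M. ?c h ^ N h) = (\<Sum>h<M. real (N h) * ln (?c h))"
    proof -
      fix N :: "nat \<Rightarrow> nat"
      have "ln (\<Prod>h<M. ?c h ^ N h) = (\<Sum>h<M. ln (?c h ^ N h))"
      proof (rule ln_prod)
        fix h show "?c h ^ N h \<noteq> 0" using cpos[of h] by (metis less_irrefl power_eq_0_iff)
      qed simp
      also have "\<dots> = (\<Sum>h<M. real (N h) * ln (?c h))" by (simp add: ln_realpow)
      finally show "ln (\<Prod>h<M. ?c h ^ N h) = (\<Sum>h<M. real (N h) * ln (?c h))" .
    qed
    have "ln (path_prob p x) = (\<Sum>h<M. real (?N h) * ln (?c h))"
      using form[of x M] a M lnp[of ?N] by simp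
    moreover have "ln (path_prob p x') = (\<Sum>h<M. real (?N' h) * ln (?c h))"
      using form[of x' M] a M lnp[of ?N'] by simp
    ultimately have "(\<Sum>h<M. real (?N h) * ln (?c h)) - (\<Sum>h<M. real (?N' h) * ln (?c h)) = 0"
      using eqp by simp
    then have S0: "(\<Sum>h<M. real_of_int (int (?N h) - int (?N' h)) * ln (?c h)) = 0"
      by (simp add: sum_subtractf[symmetric] left_diff_distrib)
    define K where "K = {h\<in>{..<M}. ?N h \<noteq> ?N' h}"
    define aa where "aa = (\<lambda>h. int (?N h) - int (?N' h))"
    have finK: "finite K" unfolding K_def by simp
    have K0: "0 \<notin> K" unfolding K_def using level0 a by simp
    have Ka: "\<forall>h\<in>K. aa h \<noteq> 0" unfolding K_def aa_def by auto
    have "(\<Sum>h\<in>K. real_of_int (aa h) * ln (?c h)) = (\<Sum>h<M. real_of_int (aa h) * ln (?c h))"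
      by (rule sum.mono_neutral_left) (auto simp: K_def aa_def)
    then have KS: "(\<Sum>h\<in>K. real_of_int (aa h) * ln (?c h)) = 0" using S0 unfolding aa_def by simp
    have "K = {}"
    proof (rule ccontr)
      assume "K \<noteq> {}"
      then show False using hyp finK K0 Ka KS by blast
    qed
    show "level_nums x = level_nums x'"
    proof
      fix h
      show "level_nums x h = level_nums x' h"
      proof (cases "h < M")
        case True
        then show ?thesis using \<open>K = {}\<close> unfolding K_def level_nums_def by auto
      next
        case False
        then have "int h \<notin> set x" "int h \<notin> set x'" using M by auto
        then show ?thesis unfolding level_nums_def by (simp add: level_U U_zero)
      qed
    qed
  }
qed

end
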